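(* If $\sum_{i=1}^M b_i\ge1$, then for every $\epsilon>0$ the energy-adequate solution $\mathbf r^\star$ is feasible for Problem 1, i.e. $r^\star_l>0$ and $\sigma_l(\mathbf r^\star)\le b_l$ for all $l$.
   Context: Fix an integer $M\ge1$, weights $w_1,\dots,w_M>0$, constants $b_1,\dots,b_M>0$, and $\epsilon>0$. For $\mathbf r\in(0,\infty)^M$ write $S(\mathbf r)=\sum_{i=1}^M r_i$ and define $$\sigma_l(\mathbf r)=\frac{(1-e^{-r_l\epsilon})S(\mathbf r)+r_le^{-r_l\epsilon}}{S(\mathbf r)+1}.$$ Problem 1's constraint set is $\{\mathbf r\in(0,\infty)^M:\sigma_l(\mathbf r)\le b_l\ \forall l\}$. Energy-adequate solution (when $\sum_i b_i\ge1$): let $\beta^\star\in[0,\max_l b_l/\sqrt{w_l}]$ be the root of $\sum_{i=1}^M\min\{b_i,\beta^\star\sqrt{w_i}\}=1$, let $x^\star=-\tfrac12+\sqrt{\tfrac14+\tfrac1\epsilon}$, and set $r^\star_l=\min\{b_l,\beta^\star\sqrt{w_l}\}\,x^\star$. *)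

theory Defs
  imports Complex_Main
begin

(* Vectors r in (0,inf)^M are represented as functions nat => real indexed by {1..M}. *)

definition S_tot :: "nat \<Rightarrow> (nat \<Rightarrow> real) \<Rightarrow> real" where
  "S_tot M r = (\<Sum>i=1..M. r i)"

definition sigma :: "nat \<Rightarrow> real \<Rightarrow> (nat \<Rightarrow> real) \<Rightarrow> nat \<Rightarrow> real" where
  "sigma M \<epsilon> r l =
     ((1 - exp (- r l * \<epsilon>)) * S_tot M r + r l * exp (- r l * \<epsilon>)) / (S_tot M r + 1)"

definition x_star :: "real \<Rightarrow> real" where
  "x_star \<epsilon> = - 1/2 + sqrt (1/4 + 1/\<epsilon>)"

definition r_star :: "(nat \<Rightarrow> real) \<Rightarrow> (nat \<Rightarrow> real) \<Rightarrow> real \<Rightarrow> real \<Rightarrow> nat \<Rightarrow> real" where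
  "r_star w b \<beta> \<epsilon> l = min (b l) (\<beta> * sqrt (w l)) * x_star \<epsilon>"

end

theory Submission
  imports Defs
begin

lemma xs_props:
  assumes "\<epsilon> > 0"
  shows "x_star \<epsilon> > 0" "x_star \<epsilon> * \<epsilon> * (x_star \<epsilon> + 1) = 1"
proof -
  have s: "sqrt (1/4 + 1/\<epsilon>) > sqrt (1/4)" using assms by (simp add: real_sqrt_less_iff)
  have h: "sqrt (1/4::real) = 1/2" by (simp add: real_sqrt_divide)
  show "x_star \<epsilon> > 0" using s h unfolding x_star_def by simp
  have q: "(sqrt (1/4 + 1/\<epsilon>))^2 = 1/4 + 1/\<epsilon>" using assms by simp
  show "x_star \<epsilon> * \<epsilon> * (x_star \<epsilon> + 1) = 1" unfolding x_star_def
    using q assms by (simp add: field_simps power2_eq_square)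
qed

theorem lemma1:
  fixes M :: nat and w b :: "nat \<Rightarrow> real" and \<epsilon> \<beta> :: real
  assumes "M \<ge> 1"
    and "\<forall>i\<in>{1..M}. w i > 0"
    and "\<forall>i\<in>{1..M}. b i > 0"
    and "\<epsilon> > 0"
    and "(\<Sum>i=1..M. b i) \<ge> 1"
    and "0 \<le> \<beta>"
    and "\<beta> \<le> Max ((\<lambda>l. b l / sqrt (w l)) ` {1..M})"
    and "(\<Sum>i=1..M. min (b i) (\<beta> * sqrt (w i))) = 1"
  shows "\<forall>l\<in>{1..M}. r_star w b \<beta> \<epsilon> l > 0 \<and> sigma M \<epsilon> (r_star w b \<beta> \<epsilon>) l \<le> b l"
proof
  fix l assume l: "l \<in> {1..M}"
  define x where "x = x_star \<epsilon>"
  define a where "a = (\<lambda>i. min (b i) (\<beta> * sqrt (w i)))"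
  have x0: "x > 0" and xe: "x * \<epsilon> * (x + 1) = 1" using xs_props[OF assms(4)] x_def by auto
  have bpos: "\<beta> > 0"
  proof (rule ccontr)
    assume "\<not> \<beta> > 0"
    hence "\<beta> = 0" using assms(6) by simp
    hence "(\<Sum>i=1..M. min (b i) (\<beta> * sqrt (w i))) = 0"
      using assms(3) by (intro sum.neutral) (auto simp: min_def)
    thus False using assms(8) by simp
  qed
  have apos: "a l > 0" using l assms(2,3) bpos by (auto simp: a_def)
  have asum: "(\<Sum>i=1..M. a i) = 1" using assms(8) by (simp add: a_def)
  have r: "r_star w b \<beta> \<epsilon> = (\<lambda>i. a i * x)" by (auto simp: r_star_def a_def x_def fun_eq_iff)
  have S: "S_tot M (r_star w b \<beta> \<epsilon>) = x"
    unfolding S_tot_def r using asum by (simp add: sum_distrib_right[symmetric])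
  have ab: "a l \<le> b l" by (simp add: a_def)
  define e where "e = exp (- (a l * x) * \<epsilon>)"
  have e1: "e \<le> 1" "e \<ge> 0" using apos x0 assms(4) by (auto simp: e_def)
  have e2: "1 - e \<le> a l * x * \<epsilon>" using exp_ge_add_one_self[of "- (a l * x) * \<epsilon>"] by (simp add: e_def)
  have "sigma M \<epsilon> (r_star w b \<beta> \<epsilon>) l = ((1 - e) * x + a l * x * e) / (x + 1)"
    unfolding sigma_def S by (simp add: r e_def)
  also have "\<dots> \<le> a l"
  proof -
    have "(1 - e) * x \<le> a l * x * \<epsilon> * x" using e2 x0 by (simp add: mult_right_mono)
    also have "\<dots> = a l * x / (x + 1)"
    proof -
      have "a l * x * \<epsilon> * x * (x + 1) = a l * x * (x * \<epsilon> * (x + 1))" by (simp add: algebra_simps)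
      also have "\<dots> = a l * x" using xe by simp
      finally show ?thesis using x0 by (simp add: field_simps)
    qed
    finally have h1: "(1 - e) * x \<le> a l * x / (x + 1)" .
    have h2: "a l * x * e \<le> a l * x" using e1 apos x0 by (simp add: mult_left_le)
    have "a l * x / (x + 1) + a l * x \<le> a l * (x + 1)"
    proof -
      have "x / (x+1) \<le> 1" using x0 by simp
      hence "a l * (x / (x+1)) \<le> a l" using apos mult_left_le[of "x/(x+1)" "a l"] x0 by simp
      thus ?thesis by (simp add: algebra_simps)
    qed
    hence "(1 - e) * x + a l * x * e \<le> a l * (x + 1)" using h1 h2 by linarith
    thus ?thesis using x0 by (simp add: divide_le_eq)
  qed
  finally show "r_star w b \<beta> \<epsilon> l > 0 \<and> sigma M \<epsilon> (r_star w b \<beta> \<epsilon>) l \<le> b l"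
    using ab apos x0 by (simp add: r)
qed

end
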